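(* Let $n\in\mathbb{N}$, $n\geq 2$, let $l\in(0,\frac{2}{n})$ and let $\alpha$ satisfy $\frac{2}{n}\leq\alpha<1+\frac{1}{n}-\frac{l}{2}$. Let $\theta$ with $1<\theta<\frac{n}{n-2}$ and $\mu>\frac{n}{2}$ be such that $$\frac{l(2\mu-1)}{4\mu-n}<\frac{n(\theta+1-2\alpha\theta)+2\theta}{2n\theta+n^2-n^2\theta}.$$ Then there is $q_r\in[1,\infty)$ such that for all $q>q_r$, $$-\frac{2l\big(nq+\mu(4+n^2-2n(2+q))\big)}{n(4\mu-n)}<\frac{q\big(2n(\theta+1-2\alpha\theta)+4\theta\big)+2n\theta(\alpha-1)(n-2)}{2n\theta+n^2-n^2\theta}.$$
   Context: For $n=2$ the condition $1<\theta<\frac{n}{n-2}$ is understood as $\theta>1$. *)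

theory Defs
  imports "HOL-Analysis.Analysis"
begin

end

theory Submission
  imports Defs
begin

theorem lemma4p5:
  fixes n :: nat and l \<alpha> \<theta> \<mu> :: real
  assumes hn: "n \<ge> 2"
    and hl: "0 < l" "l < 2 / real n"
    and ha: "2 / real n \<le> \<alpha>" "\<alpha> < 1 + 1 / real n - l / 2"
    and ht: "1 < \<theta>" "n = 2 \<or> \<theta> < real n / (real n - 2)"
    and hmu: "\<mu> > real n / 2"
    and hcond: "l * (2 * \<mu> - 1) / (4 * \<mu> - real n)
       < (real n * (\<theta> + 1 - 2 * \<alpha> * \<theta>) + 2 * \<theta>)
         / (2 * real n * \<theta> + (real n)^2 - (real n)^2 * \<theta>)"
  shows "\<exists>q_r::real. 1 \<le> q_r \<and> (\<forall>q::real. q > q_r \<longrightarrow>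
     - (2 * l * (real n * q + \<mu> * (4 + (real n)^2 - 2 * real n * (2 + q))))
        / (real n * (4 * \<mu> - real n))
     < (q * (2 * real n * (\<theta> + 1 - 2 * \<alpha> * \<theta>) + 4 * \<theta>)
          + 2 * real n * \<theta> * (\<alpha> - 1) * (real n - 2))
       / (2 * real n * \<theta> + (real n)^2 - (real n)^2 * \<theta>))"
  proof -
  define N where "N = real n"
  have N2: "N \<ge> 2" using hn by (simp add: N_def)
  define K where "K = 4 * \<mu> - N"
  have K: "K > 0" using hmu by (simp add: K_def N_def)
  define D where "D = 2 * N * \<theta> + N^2 - N^2 * \<theta>"
  have D: "D > 0"
  proof (cases "n = 2")
    case True thus ?thesis by (simp add: D_def N_def)
  next
    case False
    then have "N > 2" using hn by (simp add: N_def)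
    moreover have "\<theta> < N / (N - 2)" using ht False by (simp add: N_def)
    ultimately have "\<theta> * (N - 2) < N" by (simp add: field_simps)
    then have "N * (\<theta> * (N - 2)) < N * N" using \<open>N > 2\<close> by simp
    thus ?thesis by (simp add: D_def power2_eq_square algebra_simps)
  qed
  define a where "a = 2 * l * (2 * \<mu> - 1) / K"
  define c where "c = - 2 * l * \<mu> * (N - 2)^2 / (N * K)"
  define b where "b = 2 * (N * (\<theta> + 1 - 2 * \<alpha> * \<theta>) + 2 * \<theta>) / D"
  define d where "d = 2 * N * \<theta> * (\<alpha> - 1) * (N - 2) / D"
  have h2: "l * (2 * \<mu> - 1) / K < (N * (\<theta> + 1 - 2 * \<alpha> * \<theta>) + 2 * \<theta>) / D"
    using hcond unfolding K_def D_def N_def by simp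
  have "a = 2 * (l * (2 * \<mu> - 1) / K)" "b = 2 * ((N * (\<theta> + 1 - 2 * \<alpha> * \<theta>) + 2 * \<theta>) / D)"
    unfolding a_def b_def by simp_all
  then have ab: "a < b" using h2 by (simp only:)
  have L: "- (2 * l * (N * q + \<mu> * (4 + N^2 - 2 * N * (2 + q)))) / (N * K) = a * q + c" for q
    using K N2 unfolding a_def c_def by (simp add: field_simps power2_eq_square)
  have R: "(q * (2 * N * (\<theta> + 1 - 2 * \<alpha> * \<theta>) + 4 * \<theta>) + 2 * N * \<theta> * (\<alpha> - 1) * (N - 2)) / D
       = b * q + d" for q
    using D unfolding b_def d_def by (simp add: field_simps)
  show ?thesis
  proof (intro exI[of _ "max 1 ((c - d) / (b - a))"] conjI allI impI)
    show "1 \<le> max 1 ((c - d) / (b - a))" by simp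
  next
    fix q :: real assume "max 1 ((c - d) / (b - a)) < q"
    then have "(c - d) / (b - a) < q" by simp
    then have "c - d < q * (b - a)" using ab by (simp add: field_simps)
    then have "a * q + c < b * q + d" by (simp add: algebra_simps)
    thus "- (2 * l * (real n * q + \<mu> * (4 + (real n)^2 - 2 * real n * (2 + q))))
        / (real n * (4 * \<mu> - real n))
     < (q * (2 * real n * (\<theta> + 1 - 2 * \<alpha> * \<theta>) + 4 * \<theta>)
          + 2 * real n * \<theta> * (\<alpha> - 1) * (real n - 2))
       / (2 * real n * \<theta> + (real n)^2 - (real n)^2 * \<theta>)"
      using L[of q] R[of q] unfolding K_def D_def N_def by simp
  qed
qed

end
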